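(* Let $I\subseteq\mathfrak{M}$ be an ideal of $P$ and let $\mathrm{GFan}(I)=\{\overline G_1,\dots,\overline G_k\}$. (a) For $i=1,\dots,k$, $\mathrm{sepdim}(P/I)\le n-\#\mathrm{LI}(\overline G_i)$. (b) For $i\in\{1,\dots,k\}$, $\mathrm{sepdim}(P/I)=n-\#\mathrm{LI}(\overline G_i)$ if and only if $\#\mathrm{LI}(\overline G_i)=\max_{1\le j\le k}\#\mathrm{LI}(\overline G_j)$. (c) For $i$ such that $\#\mathrm{LI}(\overline G_i)$ is maximal, the $\mathrm{LI}(\overline G_i)$-separating re-embedding $\Phi:P/I\to\widehat P/(I\cap\widehat P)$ (with $\widehat P=K[X\setminus\mathrm{LI}(\overline G_i)]$) is an optimal separating re-embedding.
   Context: $K$ is a field, $P=K[x_1,\dots,x_n]$, $X=\{x_1,\dots,x_n\}$, $\mathfrak{M}=\langle x_1,\dots,x_n\rangle$. For $f\in P$, $\mathrm{indets}(f)$ is the set of indeterminates dividing some term in the support of $f$. For $f\in\mathfrak{M}$ with nonzero degree-one part, $z$ an indeterminate occurring in that degree-one part, and $c\ne0$ the coefficient of $z$ in $f$, $\mathrm{tail}_z(f)=z-\frac1cf$; $f$ is $z$-separating if $z\notin\mathrm{indets}(\mathrm{tail}_z(f))$. For distinct indeterminates $Z=\{z_1,\dots,z_s\}$, a tuple $(f_1,\dots,f_s)$ of nonzero elements of $\mathfrak{M}$ is coherently $Z$-separating if each $f_i$ is $z_i$-separating and $z_i\notin\mathrm{indets}(f_j)$ for $j\neq i$. If $I$ contains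 such a tuple, the $Z$-separating re-embedding is the $K$-algebra isomorphism $\Phi:P/I\to\widehat P/(I\cap\widehat P)$, $\widehat P=K[X\setminus Z]$, induced by $x\mapsto x$ for $x\notin Z$ and $z_i\mapsto\mathrm{tail}_{z_i}(f_i)$ (it does not depend on the choice of the tuple). It is an optimal separating re-embedding if $\#Z'\le\#Z$ for every $Z'\subseteq X$ such that $I$ contains a coherently $Z'$-separating tuple; the separating embedding dimension is then $\mathrm{sepdim}(P/I)=n-\#Z$. A marked reduced Gröbner basis of $I$ is the set of pairs $\{(\mathrm{LT}_\sigma(g),g)\mid g\in G\}$ for $G$ the reduced $\sigma$-Gröbner basis of $I$ for some term ordering $\sigma$; $\mathrm{GFan}(I)$ is the set of all distinct marked reduced Gröbner bases of $I$; for $\overline G\in\mathrm{GFan}(I)$, $\mathrm{LI}(\overline G)$ is the set of indeterminates $z\in X$ that occur as a marked leading term of some element of $\overline G$. *)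

theory Defs
  imports "HOL-Library.Poly_Mapping"
begin

text \<open>Polynomials in indeterminates x_0,...,x_{n-1} over a field: terms are
  finitely supported exponent vectors nat =>0 nat, polynomials are finitely
  supported maps from terms to coefficients.  The variable set is X = {..<n}.\<close>

type_synonym 'a mpoly = "(nat \<Rightarrow>\<^sub>0 nat) \<Rightarrow>\<^sub>0 'a"

definition var :: "nat \<Rightarrow> 'a::{zero,one} mpoly" where
  "var i = Poly_Mapping.single (Poly_Mapping.single i 1) 1"

definition Pn :: "nat \<Rightarrow> ('a::zero) mpoly set" where
  "Pn n = {f::'a mpoly. \<forall>t\<in>Poly_Mapping.keys f. Poly_Mapping.keys t \<subseteq> {..<n}}"

definition terms_n :: "nat \<Rightarrow> (nat \<Rightarrow>\<^sub>0 nat) set" where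
  "terms_n n = {t::nat \<Rightarrow>\<^sub>0 nat. Poly_Mapping.keys t \<subseteq> {..<n}}"

definition indets :: "('a::zero) mpoly \<Rightarrow> nat set" where
  "indets f = \<Union> (Poly_Mapping.keys ` Poly_Mapping.keys f)"

definition maxideal :: "nat \<Rightarrow> ('a::zero) mpoly set" where
  "maxideal n = {f \<in> Pn n. Poly_Mapping.lookup f 0 = 0}"

definition is_ideal :: "nat \<Rightarrow> ('a::comm_ring_1) mpoly set \<Rightarrow> bool" where
  "is_ideal n I \<longleftrightarrow> I \<subseteq> Pn n \<and> 0 \<in> I \<and> (\<forall>f\<in>I. \<forall>g\<in>I. f + g \<in> I)
     \<and> (\<forall>f\<in>I. \<forall>h\<in>Pn n. h * f \<in> I)"

definition lin_coeff :: "('a::zero) mpoly \<Rightarrow> nat \<Rightarrow> 'a" where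
  "lin_coeff f z = Poly_Mapping.lookup f (Poly_Mapping.single z 1)"

definition tail :: "nat \<Rightarrow> ('a::field) mpoly \<Rightarrow> 'a mpoly" where
  "tail z f = var z - Poly_Mapping.map (\<lambda>a. a / lin_coeff f z) f"

definition z_separating :: "nat \<Rightarrow> ('a::field) mpoly \<Rightarrow> nat \<Rightarrow> bool" where
  "z_separating n f z \<longleftrightarrow> f \<in> maxideal n \<and> z < n \<and> lin_coeff f z \<noteq> 0
     \<and> z \<notin> indets (tail z f)"

definition coherently_separating ::
    "nat \<Rightarrow> nat set \<Rightarrow> (nat \<Rightarrow> ('a::field) mpoly) \<Rightarrow> bool" where
  "coherently_separating n Z F \<longleftrightarrow> Z \<subseteq> {..<n}
     \<and> (\<forall>z\<in>Z. F z \<noteq> 0 \<and> F z \<in> maxideal n \<and> z_separating n (F z) z)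
     \<and> (\<forall>z\<in>Z. \<forall>z'\<in>Z. z \<noteq> z' \<longrightarrow> z \<notin> indets (F z'))"

definition has_sep_tuple :: "nat \<Rightarrow> ('a::field) mpoly set \<Rightarrow> nat set \<Rightarrow> bool" where
  "has_sep_tuple n I Z \<longleftrightarrow> (\<exists>F. coherently_separating n Z F \<and> (\<forall>z\<in>Z. F z \<in> I))"

text \<open>Phi is an optimal separating re-embedding: the Z-separating re-embedding
  exists (I contains a coherently Z-separating tuple) and #Z' <= #Z for every
  Z' for which I contains a coherently Z'-separating tuple.\<close>
definition optimal_sep_reembedding :: "nat \<Rightarrow> ('a::field) mpoly set \<Rightarrow> nat set \<Rightarrow> bool" where
  "optimal_sep_reembedding n I Z \<longleftrightarrow> has_sep_tuple n I Z
     \<and> (\<forall>Z'. Z' \<subseteq> {..<n} \<and> has_sep_tuple n I Z' \<longrightarrow> card Z' \<le> card Z)"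

definition sepdim :: "nat \<Rightarrow> ('a::field) mpoly set \<Rightarrow> nat" where
  "sepdim n I = n - Max {card Z | Z. Z \<subseteq> {..<n} \<and> has_sep_tuple n I Z}"

definition term_ordering ::
    "nat \<Rightarrow> ((nat \<Rightarrow>\<^sub>0 nat) \<Rightarrow> (nat \<Rightarrow>\<^sub>0 nat) \<Rightarrow> bool) \<Rightarrow> bool" where
  "term_ordering n ord \<longleftrightarrow>
     (\<forall>t\<in>terms_n n. ord t t)
   \<and> (\<forall>t\<in>terms_n n. \<forall>u\<in>terms_n n. ord t u \<and> ord u t \<longrightarrow> t = u)
   \<and> (\<forall>t\<in>terms_n n. \<forall>u\<in>terms_n n. \<forall>v\<in>terms_n n. ord t u \<and> ord u v \<longrightarrow> ord t v)
   \<and> (\<forall>t\<in>terms_n n. \<forall>u\<in>terms_n n. ord t u \<or> ord u t)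
   \<and> (\<forall>t\<in>terms_n n. \<forall>u\<in>terms_n n. \<forall>s\<in>terms_n n. ord t u \<longrightarrow> ord (t + s) (u + s))
   \<and> (\<forall>t\<in>terms_n n. ord 0 t)"

definition lt :: "((nat \<Rightarrow>\<^sub>0 nat) \<Rightarrow> (nat \<Rightarrow>\<^sub>0 nat) \<Rightarrow> bool) \<Rightarrow> ('a::zero) mpoly
    \<Rightarrow> (nat \<Rightarrow>\<^sub>0 nat)" where
  "lt ord f = (THE t. t \<in> Poly_Mapping.keys f \<and> (\<forall>u\<in>Poly_Mapping.keys f. ord u t))"

definition lc :: "((nat \<Rightarrow>\<^sub>0 nat) \<Rightarrow> (nat \<Rightarrow>\<^sub>0 nat) \<Rightarrow> bool) \<Rightarrow> ('a::zero) mpoly \<Rightarrow> 'a" where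
  "lc ord f = Poly_Mapping.lookup f (lt ord f)"

definition tdvd :: "(nat \<Rightarrow>\<^sub>0 nat) \<Rightarrow> (nat \<Rightarrow>\<^sub>0 nat) \<Rightarrow> bool" where
  "tdvd t u \<longleftrightarrow> (\<forall>i. Poly_Mapping.lookup t i \<le> Poly_Mapping.lookup u i)"

definition reduced_GB :: "nat \<Rightarrow> ((nat \<Rightarrow>\<^sub>0 nat) \<Rightarrow> (nat \<Rightarrow>\<^sub>0 nat) \<Rightarrow> bool)
    \<Rightarrow> ('a::field) mpoly set \<Rightarrow> 'a mpoly set \<Rightarrow> bool" where
  "reduced_GB n ord I G \<longleftrightarrow> finite G \<and> G \<subseteq> I \<and> 0 \<notin> G
     \<and> (\<forall>f\<in>I. f \<noteq> 0 \<longrightarrow> (\<exists>g\<in>G. tdvd (lt ord g) (lt ord f)))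
     \<and> (\<forall>g\<in>G. lc ord g = 1)
     \<and> (\<forall>g\<in>G. \<forall>h\<in>G. g \<noteq> h \<longrightarrow> (\<forall>t\<in>Poly_Mapping.keys g. \<not> tdvd (lt ord h) t))"

definition GFan :: "nat \<Rightarrow> ('a::field) mpoly set
    \<Rightarrow> ((nat \<Rightarrow>\<^sub>0 nat) \<times> 'a mpoly) set set" where
  "GFan n I = {(\<lambda>g. (lt ord g, g)) ` G | ord G. term_ordering n ord \<and> reduced_GB n ord I G}"

definition LI :: "((nat \<Rightarrow>\<^sub>0 nat) \<times> ('a::zero) mpoly) set \<Rightarrow> nat set" where
  "LI Gb = {z. \<exists>g. (Poly_Mapping.single z 1, g) \<in> Gb}"

end

theory Submission
  imports Defs "HOL-Library.FuncSet"
begin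


lemma lookup_map0: "g 0 = 0 \<Longrightarrow> Poly_Mapping.lookup (Poly_Mapping.map g p) k = g (Poly_Mapping.lookup p k)"
  by (simp add: Poly_Mapping.map.rep_eq when_def)

lemma lookup_single_mult:
  "Poly_Mapping.lookup (Poly_Mapping.single t c * f) k = (\<Sum>q. c * Poly_Mapping.lookup f q when k = t + q)"
  by (simp add: lookup_mult lookup_single Sum_any_right_distrib mult_when when_mult when_when conj_commute)

lemma lookup_single_mult_add:
  "Poly_Mapping.lookup (Poly_Mapping.single t c * (f::('b::cancel_comm_monoid_add \<Rightarrow>\<^sub>0 'a::comm_semiring_1))) (t + v) = c * Poly_Mapping.lookup f v"
proof -
  have "(\<lambda>q. c * Poly_Mapping.lookup f q when t + v = t + q) = (\<lambda>q. c * Poly_Mapping.lookup f q when q = v)"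
    by (auto simp: when_def)
  then show ?thesis by (simp add: lookup_single_mult)
qed


abbreviation kys :: "('b \<Rightarrow>\<^sub>0 'c::zero) \<Rightarrow> 'b set" where "kys \<equiv> Poly_Mapping.keys"
abbreviation lkp :: "('b \<Rightarrow>\<^sub>0 'c::zero) \<Rightarrow> 'b \<Rightarrow> 'c" where "lkp \<equiv> Poly_Mapping.lookup"

lemma T_add: "t \<in> terms_n n \<Longrightarrow> u \<in> terms_n n \<Longrightarrow> t + u \<in> terms_n n"
proof -
  assume "t \<in> terms_n n" "u \<in> terms_n n"
  hence "kys t \<union> kys u \<subseteq> {..<n}" unfolding terms_n_def by simp
  thus ?thesis unfolding terms_n_def using keys_add[of t u] by (simp add: order_trans)
qed

lemma T_diff: "t \<in> terms_n n \<Longrightarrow> t - u \<in> terms_n n"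
proof -
  assume t: "t \<in> terms_n n"
  have "kys (t - u) \<subseteq> kys t"
  proof
    fix x assume "x \<in> kys (t - u)"
    thus "x \<in> kys t" by (auto simp: in_keys_iff lookup_minus)
  qed
  thus ?thesis using t unfolding terms_n_def by blast
qed

lemma Pn_keys: "f \<in> Pn n \<Longrightarrow> t \<in> kys f \<Longrightarrow> t \<in> terms_n n"
  unfolding Pn_def terms_n_def by simp

lemma Pn_add: "f \<in> Pn n \<Longrightarrow> g \<in> Pn n \<Longrightarrow> f + g \<in> Pn n"
  unfolding Pn_def
proof (simp, intro ballI)
  fix t assume f: "\<forall>t\<in>kys f. kys t \<subseteq> {..<n}" and g: "\<forall>t\<in>kys g. kys t \<subseteq> {..<n}"
    and t: "t \<in> kys (f + g)"
  have "t \<in> kys f \<union> kys g" using t keys_add by (rule subsetD[rotated])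
  thus "kys t \<subseteq> {..<n}" using f g by blast
qed

lemma Pn_diff: "f \<in> Pn n \<Longrightarrow> g \<in> Pn n \<Longrightarrow> (f::'a::ab_group_add mpoly) - g \<in> Pn n"
  unfolding Pn_def
proof (simp, intro ballI)
  fix t assume f: "\<forall>t\<in>kys f. kys t \<subseteq> {..<n}" and g: "\<forall>t\<in>kys g. kys t \<subseteq> {..<n}"
    and t: "t \<in> kys (f - g)"
  have "t \<in> kys f \<union> kys g" using t keys_diff by (rule subsetD[rotated])
  thus "kys t \<subseteq> {..<n}" using f g by blast
qed

lemma Pn_single: "t \<in> terms_n n \<Longrightarrow> Poly_Mapping.single t c \<in> Pn n"
  unfolding Pn_def terms_n_def by auto

lemma Pn_zero: "0 \<in> Pn n"
  unfolding Pn_def by auto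

lemma T_zero: "0 \<in> terms_n n"
  unfolding terms_n_def by auto

lemma Pn_iff: "f \<in> Pn n \<longleftrightarrow> (\<forall>t\<in>kys f. t \<in> terms_n n)"
  unfolding Pn_def terms_n_def by simp

lemma Pn_mult: "f \<in> Pn n \<Longrightarrow> g \<in> Pn n \<Longrightarrow> (f::'a::comm_ring_1 mpoly) * g \<in> Pn n"
proof -
  assume f: "f \<in> Pn n" and g: "g \<in> Pn n"
  { fix t assume t: "t \<in> kys (f * g)"
    have "t \<in> {a + b | a b. a \<in> kys f \<and> b \<in> kys g}" using subsetD[OF keys_mult t] .
    hence "\<exists>a b. t = a + b \<and> a \<in> kys f \<and> b \<in> kys g" by simp
    then obtain a b where ab: "a \<in> kys f" "b \<in> kys g" "t = a + b" by blast
    have "a \<in> terms_n n" "b \<in> terms_n n" using Pn_keys f g ab by auto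
    hence "t \<in> terms_n n" using T_add ab(3) by simp }
  thus ?thesis unfolding Pn_iff by blast
qed

lemma keys_single_mult: "kys (Poly_Mapping.single t c * f) \<subseteq> (\<lambda>v. t + v) ` kys f"
proof
  fix x assume x: "x \<in> kys (Poly_Mapping.single t c * f)"
  have "x \<in> {a + b | a b. a \<in> kys (Poly_Mapping.single t c) \<and> b \<in> kys f}" using subsetD[OF keys_mult x] .
  hence "\<exists>a b. x = a + b \<and> a \<in> kys (Poly_Mapping.single t c) \<and> b \<in> kys f" by simp
  then obtain a b where ab: "a \<in> kys (Poly_Mapping.single t c)" "b \<in> kys f" "x = a + b" by blast
  have "a = t" using ab(1) by (simp split: if_splits)
  thus "x \<in> (\<lambda>v. t + v) ` kys f" using ab by blast
qed

lemma scale_lookup: "lkp (Poly_Mapping.single 0 c * f) k = (c::'a::comm_ring_1) * lkp f k"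
  by (simp add: mult_map_scale_conv_mult[symmetric] lookup_map0)

lemma minus_as_mult: "(f::'a::comm_ring_1 mpoly) - g = f + Poly_Mapping.single 0 (-1) * g"
  by (rule poly_mapping_eqI) (simp add: lookup_add lookup_minus scale_lookup)

context
  fixes n :: nat and I :: "'a::comm_ring_1 mpoly set"
  assumes ideal: "is_ideal n I"
begin

lemma I_all: "I \<subseteq> Pn n \<and> 0 \<in> I \<and> (\<forall>f\<in>I. \<forall>g\<in>I. f + g \<in> I)
     \<and> (\<forall>f\<in>I. \<forall>h\<in>Pn n. h * f \<in> I)" using ideal unfolding is_ideal_def .
lemma I_sub: "I \<subseteq> Pn n" using I_all by simp
lemma I_zero: "0 \<in> I" using I_all by simp
lemma I_add: "f \<in> I \<Longrightarrow> g \<in> I \<Longrightarrow> f + g \<in> I" using I_all by simp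
lemma I_mult: "f \<in> I \<Longrightarrow> h \<in> Pn n \<Longrightarrow> h * f \<in> I" using I_all by simp
lemma I_scale: "f \<in> I \<Longrightarrow> Poly_Mapping.single 0 c * f \<in> I"
  by (rule I_mult, assumption, rule Pn_single[OF T_zero])
lemma I_diff: "f \<in> I \<Longrightarrow> g \<in> I \<Longrightarrow> f - g \<in> I"
  by (subst minus_as_mult) (intro I_add I_scale)
end

context
  fixes n :: nat and ord
  assumes TO: "term_ordering n ord"
begin

lemma TO_all: "(\<forall>t\<in>terms_n n. ord t t)
   \<and> (\<forall>t\<in>terms_n n. \<forall>u\<in>terms_n n. ord t u \<and> ord u t \<longrightarrow> t = u)
   \<and> (\<forall>t\<in>terms_n n. \<forall>u\<in>terms_n n. \<forall>v\<in>terms_n n. ord t u \<and> ord u v \<longrightarrow> ord t v)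
   \<and> (\<forall>t\<in>terms_n n. \<forall>u\<in>terms_n n. ord t u \<or> ord u t)
   \<and> (\<forall>t\<in>terms_n n. \<forall>u\<in>terms_n n. \<forall>s\<in>terms_n n. ord t u \<longrightarrow> ord (t + s) (u + s))
   \<and> (\<forall>t\<in>terms_n n. ord 0 t)"
  using TO unfolding term_ordering_def .

lemma o_refl: "t \<in> terms_n n \<Longrightarrow> ord t t" using conjunct1[OF TO_all] by blast
lemma o_antisym: "t \<in> terms_n n \<Longrightarrow> u \<in> terms_n n \<Longrightarrow> ord t u \<Longrightarrow> ord u t \<Longrightarrow> t = u"
  using conjunct1[OF conjunct2[OF TO_all]] by blast
lemma o_trans: "t \<in> terms_n n \<Longrightarrow> u \<in> terms_n n \<Longrightarrow> v \<in> terms_n n \<Longrightarrow> ord t u \<Longrightarrow> ord u v \<Longrightarrow> ord t v"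
  using conjunct1[OF conjunct2[OF conjunct2[OF TO_all]]] by blast
lemma o_total: "t \<in> terms_n n \<Longrightarrow> u \<in> terms_n n \<Longrightarrow> ord t u \<or> ord u t"
  using conjunct1[OF conjunct2[OF conjunct2[OF conjunct2[OF TO_all]]]] by blast
lemma o_compat: "t \<in> terms_n n \<Longrightarrow> u \<in> terms_n n \<Longrightarrow> s \<in> terms_n n \<Longrightarrow> ord t u \<Longrightarrow> ord (t + s) (u + s)"
  using conjunct1[OF conjunct2[OF conjunct2[OF conjunct2[OF conjunct2[OF TO_all]]]]] by blast
lemma o_zero: "t \<in> terms_n n \<Longrightarrow> ord 0 t"
  using conjunct2[OF conjunct2[OF conjunct2[OF conjunct2[OF conjunct2[OF TO_all]]]]] by blast

lemma max_exists: "finite A \<Longrightarrow> A \<noteq> {} \<Longrightarrow> A \<subseteq> terms_n n \<Longrightarrow> \<exists>t\<in>A. \<forall>u\<in>A. ord u t"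
proof (induction A rule: finite_ne_induct)
  case (singleton x) thus ?case using o_refl by auto
next
  case (insert x F)
  then obtain t where t: "t \<in> F" "\<forall>u\<in>F. ord u t" by auto
  show ?case
  proof (cases "ord x t")
    case True thus ?thesis using t insert.prems by auto
  next
    case False
    hence "ord t x" using o_total insert.prems t by auto
    have "\<forall>u\<in>insert x F. ord u x"
    proof
      fix u assume u: "u \<in> insert x F"
      show "ord u x"
      proof (cases "u = x")
        case True thus ?thesis using o_refl insert.prems by auto
      next
        case False
        hence "u \<in> F" using u by auto
        thus ?thesis using o_trans[of u t x] t \<open>ord t x\<close> insert.prems by auto
      qed
    qed
    thus ?thesis by auto
  qed
qed

lemma lt_eq: "f \<in> Pn n \<Longrightarrow> t \<in> kys f \<Longrightarrow> \<forall>u\<in>kys f. ord u t \<Longrightarrow> lt ord f = t"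
proof -
  assume f: "f \<in> Pn n" and t: "t \<in> kys f" and m: "\<forall>u\<in>kys f. ord u t"
  show ?thesis unfolding lt_def
  proof (rule the_equality)
    show "t \<in> kys f \<and> (\<forall>u\<in>kys f. ord u t)" using t m by blast
    fix t' assume "t' \<in> kys f \<and> (\<forall>u\<in>kys f. ord u t')"
    thus "t' = t" using o_antisym[of t' t] Pn_keys[OF f] t m by blast
  qed
qed

lemma lt_props: "f \<in> Pn n \<Longrightarrow> f \<noteq> 0 \<Longrightarrow> lt ord f \<in> kys f \<and> (\<forall>u\<in>kys f. ord u (lt ord f))"
proof -
  assume f: "f \<in> Pn n" "f \<noteq> 0"
  then obtain t where "t \<in> kys f" "\<forall>u\<in>kys f. ord u t"
    using max_exists[of "kys f"] Pn_keys by auto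
  moreover have "lt ord f = t" using lt_eq[OF f(1)] calculation by blast
  ultimately show ?thesis by simp
qed

lemma tdvd_add: "tdvd s t \<Longrightarrow> t = (t - s) + s"
  by (rule poly_mapping_eqI) (simp add: lookup_add lookup_minus tdvd_def)

lemma tdvd_ord: "s \<in> terms_n n \<Longrightarrow> t \<in> terms_n n \<Longrightarrow> tdvd s t \<Longrightarrow> ord s t"
proof -
  assume s: "s \<in> terms_n n" and t: "t \<in> terms_n n" and d: "tdvd s t"
  have "ord (0 + s) ((t - s) + s)" using o_compat[of 0 "t - s" s] o_zero T_diff T_zero s t by blast
  thus ?thesis using tdvd_add[OF d] by simp
qed

end


lemma antichain_finite_aux:
  assumes "finite V"
    and "\<forall>a\<in>A. \<forall>b\<in>A. \<forall>i. i \<notin> V \<longrightarrow> lkp a i = lkp b i"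
    and "\<forall>a\<in>A. \<forall>b\<in>A. tdvd a b \<longrightarrow> a = b"
  shows "finite (A :: (nat \<Rightarrow>\<^sub>0 nat) set)"
  using assms
proof (induction "card V" arbitrary: V A rule: less_induct)
  case less
  show ?case
  proof (cases "A = {}")
    case True thus ?thesis by simp
  next
    case False
    then obtain a where a: "a \<in> A" by blast
    define B where "B i c = {b\<in>A. lkp b i = c}" for i c
    have sub: "A \<subseteq> insert a (\<Union>i\<in>V. \<Union>c\<in>{..<lkp a i}. B i c)"
    proof
      fix b assume b: "b \<in> A"
      show "b \<in> insert a (\<Union>i\<in>V. \<Union>c\<in>{..<lkp a i}. B i c)"
      proof (cases "b = a")
        case True thus ?thesis by simp
      next
        case False
        hence "\<not> tdvd a b" using less.prems(3) a b by metis
        then obtain i where i: "lkp b i < lkp a i" unfolding tdvd_def by (auto simp: not_le)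
        have "i \<in> V"
        proof (rule ccontr)
          assume "i \<notin> V" hence "lkp a i = lkp b i" using less.prems(2) a b by metis
          thus False using i by simp
        qed
        moreover have "b \<in> B i (lkp b i)" using b unfolding B_def by simp
        ultimately show ?thesis using i by auto
      qed
    qed
    have fin: "finite (B i c)" if "i \<in> V" for i c
    proof -
      have c1: "card (V - {i}) < card V" using that less.prems(1) by (rule card_Diff1_less[rotated])
      have c2: "finite (V - {i})" using less.prems(1) by simp
      have c3: "\<forall>a\<in>B i c. \<forall>b\<in>B i c. \<forall>j. j \<notin> V - {i} \<longrightarrow> lkp a j = lkp b j"
        using less.prems(2) unfolding B_def by auto
      have c4: "\<forall>a\<in>B i c. \<forall>b\<in>B i c. tdvd a b \<longrightarrow> a = b"
        using less.prems(3) unfolding B_def by auto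
      show ?thesis by (rule less.hyps[OF c1 c2 c3 c4])
    qed
    have "finite (insert a (\<Union>i\<in>V. \<Union>c\<in>{..<lkp a i}. B i c))"
      using fin less.prems(1) by simp
    thus ?thesis using sub by (rule finite_subset[rotated])
  qed
qed

lemma T_outside: "t \<in> terms_n n \<Longrightarrow> i \<notin> {..<n} \<Longrightarrow> lkp t i = 0"
  unfolding terms_n_def by (auto simp: in_keys_iff)

lemma antichain_finite:
  assumes "A \<subseteq> terms_n n" and "\<forall>a\<in>A. \<forall>b\<in>A. tdvd a b \<longrightarrow> a = b"
  shows "finite A"
proof (rule antichain_finite_aux[of "{..<n}"])
  show "finite {..<n}" by simp
  show "\<forall>a\<in>A. \<forall>b\<in>A. \<forall>i. i \<notin> {..<n} \<longrightarrow> lkp a i = lkp b i"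
    using assms(1) T_outside by (metis subsetD)
  show "\<forall>a\<in>A. \<forall>b\<in>A. tdvd a b \<longrightarrow> a = b" by (rule assms(2))
qed

definition deg :: "nat \<Rightarrow> (nat \<Rightarrow>\<^sub>0 nat) \<Rightarrow> nat" where
  "deg n t = (\<Sum>i<n. lkp t i)"

lemma tdvd_deg_le: "tdvd s t \<Longrightarrow> deg n s \<le> deg n t"
  unfolding deg_def tdvd_def by (rule sum_mono) simp

lemma tdvd_deg_eq:
  assumes s: "s \<in> terms_n n" and t: "t \<in> terms_n n" and d: "tdvd s t" and e: "deg n t \<le> deg n s"
  shows "s = t"
proof (rule ccontr)
  assume "s \<noteq> t"
  then obtain i where i: "lkp s i \<noteq> lkp t i" using poly_mapping_eqI by metis
  have "i \<in> {..<n}"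
  proof (rule ccontr)
    assume "i \<notin> {..<n}" thus False using T_outside[OF s] T_outside[OF t] i by metis
  qed
  moreover have "lkp s i < lkp t i" using i d unfolding tdvd_def by (metis le_neq_implies_less)
  ultimately have "deg n s < deg n t" unfolding deg_def
    using d unfolding tdvd_def by (intro sum_strict_mono_ex1) auto
  thus False using e by simp
qed

lemma tdvd_trans: "tdvd a b \<Longrightarrow> tdvd b c \<Longrightarrow> tdvd a c"
  unfolding tdvd_def using order_trans by metis

lemma tdvd_refl: "tdvd a a"
  unfolding tdvd_def by simp

lemma keys_scale: "kys (Poly_Mapping.single 0 c * (h::'a::comm_ring_1 mpoly)) \<subseteq> kys h"
proof
  fix u assume "u \<in> kys (Poly_Mapping.single 0 c * h)"
  hence "c * lkp h u \<noteq> 0" by (simp add: in_keys_iff scale_lookup)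
  thus "u \<in> kys h" by (auto simp: in_keys_iff)
qed


definition LTI :: "_ \<Rightarrow> 'a::field mpoly set \<Rightarrow> _" where "LTI ord I = {lt ord f | f. f \<in> I \<and> f \<noteq> 0}"
definition Min_set :: "_ \<Rightarrow> 'a::field mpoly set \<Rightarrow> _" where
  "Min_set ord I = {t \<in> LTI ord I. \<forall>s\<in>LTI ord I. tdvd s t \<longrightarrow> s = t}"

context
  fixes n :: nat and ord and I :: "'a::field mpoly set"
  assumes TO: "term_ordering n ord" and ideal: "is_ideal n I"
begin

lemma LTI_T: "t \<in> LTI ord I \<Longrightarrow> t \<in> terms_n n"
proof -
  assume "t \<in> LTI ord I"
  then obtain f where f: "f \<in> I" "f \<noteq> 0" "t = lt ord f" unfolding LTI_def by blast
  have fP: "f \<in> Pn n" using f(1) I_sub[OF ideal] by blast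
  show ?thesis using lt_props[OF TO fP f(2)] f(3) Pn_keys[OF fP] by simp
qed

lemma LTI_I: "f \<in> I \<Longrightarrow> f \<noteq> 0 \<Longrightarrow> lt ord f \<in> LTI ord I"
  unfolding LTI_def by blast

lemma lt_mult_monom:
  fixes f :: "'a mpoly"
  assumes f: "f \<in> Pn n" "f \<noteq> 0" and v: "v \<in> terms_n n"
  shows "Poly_Mapping.single v 1 * f \<noteq> 0 \<and> lt ord (Poly_Mapping.single v 1 * f) = v + lt ord f"
proof -
  let ?h = "Poly_Mapping.single v 1 * f"
  have hP: "?h \<in> Pn n" using v f(1) by (rule Pn_mult[OF Pn_single])
  have lp: "lt ord f \<in> kys f \<and> (\<forall>u\<in>kys f. ord u (lt ord f))" using lt_props[OF TO f] .
  have "lkp ?h (v + lt ord f) = lkp f (lt ord f)" using lookup_single_mult_add[of v 1 f "lt ord f"] by simp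
  hence k: "v + lt ord f \<in> kys ?h" using lp by (simp add: in_keys_iff)
  have m: "\<forall>u\<in>kys ?h. ord u (v + lt ord f)"
  proof
    fix u assume "u \<in> kys ?h"
    then obtain w where w: "w \<in> kys f" "u = v + w" using keys_single_mult by blast
    have "ord (w + v) (lt ord f + v)"
      using o_compat[OF TO, of w "lt ord f" v] w(1) lp Pn_keys[OF f(1)] v by simp
    thus "ord u (v + lt ord f)" using w(2) by (simp add: add.commute)
  qed
  have "?h \<noteq> 0" using k by auto
  thus ?thesis using lt_eq[OF TO hP k m] by simp
qed

lemma LTI_up: "t \<in> LTI ord I \<Longrightarrow> u \<in> terms_n n \<Longrightarrow> tdvd t u \<Longrightarrow> u \<in> LTI ord I"
proof -
  assume t: "t \<in> LTI ord I" and u: "u \<in> terms_n n" and d: "tdvd t u"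
  then obtain f where f: "f \<in> I" "f \<noteq> 0" "t = lt ord f" unfolding LTI_def by blast
  have fP: "f \<in> Pn n" using f(1) I_sub[OF ideal] by blast
  have v: "u - t \<in> terms_n n" using T_diff[OF u] .
  have h: "Poly_Mapping.single (u - t) 1 * f \<in> I" using I_mult[OF ideal f(1) Pn_single[OF v]] .
  have "Poly_Mapping.single (u - t) 1 * f \<noteq> 0 \<and> lt ord (Poly_Mapping.single (u - t) 1 * f) = (u - t) + t"
    using lt_mult_monom[OF fP f(2) v] f(3) by simp
  moreover have "(u - t) + t = u" using tdvd_add[OF TO d] by simp
  ultimately show ?thesis using LTI_I[OF h] by simp
qed

lemma min_exists: "t \<in> LTI ord I \<Longrightarrow> \<exists>m\<in>Min_set ord I. tdvd m t"
proof -
  assume t: "t \<in> LTI ord I"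
  let ?P = "\<lambda>s. s \<in> LTI ord I \<and> tdvd s t"
  have "?P t" using t tdvd_refl by simp
  then obtain s where s: "?P s" "\<forall>y. ?P y \<longrightarrow> deg n s \<le> deg n y"
    using ex_has_least_nat[of ?P t "deg n"] by blast
  have "s \<in> Min_set ord I" unfolding Min_set_def
  proof (intro CollectI conjI ballI impI)
    show "s \<in> LTI ord I" using s by simp
    fix s' assume s': "s' \<in> LTI ord I" "tdvd s' s"
    have "?P s'" using s' s(1) tdvd_trans by blast
    hence "deg n s \<le> deg n s'" using s(2) by blast
    thus "s' = s" using tdvd_deg_eq[OF LTI_T[OF s'(1)] LTI_T[OF conjunct1[OF s(1)]] s'(2)] by simp
  qed
  thus ?thesis using s(1) by blast
qed

lemma Min_finite: "finite (Min_set ord I)"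
proof (rule antichain_finite)
  show "Min_set ord I \<subseteq> terms_n n" using LTI_T unfolding Min_set_def by blast
  show "\<forall>a\<in>Min_set ord I. \<forall>b\<in>Min_set ord I. tdvd a b \<longrightarrow> a = b" unfolding Min_set_def by blast
qed

end


definition good_nf :: "nat \<Rightarrow> _ \<Rightarrow> 'a::field mpoly set \<Rightarrow> 'a mpoly \<Rightarrow> 'a mpoly \<Rightarrow> bool" where
  "good_nf n ord I f r \<longleftrightarrow> r \<in> Pn n \<and> f - r \<in> I \<and> kys r \<inter> LTI ord I = {} \<and> (\<forall>u\<in>kys r. \<exists>v\<in>kys f. ord u v)"

context
  fixes n :: nat and ord and I :: "'a::field mpoly set"
  assumes TO: "term_ordering n ord" and ideal: "is_ideal n I"
    and WF: "wf {(u, s). u \<in> terms_n n \<and> s \<in> terms_n n \<and> ord u s \<and> u \<noteq> s}"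
begin

abbreviation NS :: "'a mpoly \<Rightarrow> (nat \<Rightarrow>\<^sub>0 nat) set" where "NS f \<equiv> kys f \<inter> LTI ord I"

lemma reduce_step:
  fixes f :: "'a mpoly"
  assumes f: "f \<in> Pn n" and m: "m \<in> NS f" and mx: "\<forall>u\<in>NS f. ord u m"
  shows "\<exists>f'\<in>Pn n. f - f' \<in> I \<and> (\<forall>u\<in>NS f'. ord u m \<and> u \<noteq> m) \<and> (\<forall>u\<in>kys f'. \<exists>v\<in>kys f. ord u v)"
proof -
  have "m \<in> LTI ord I" using m by blast
  then obtain h where h: "h \<in> I" "h \<noteq> 0" "m = lt ord h" by (auto simp: LTI_def)
  have hP: "h \<in> Pn n" using h(1) I_sub[OF ideal] by blast
  have lp: "m \<in> kys h \<and> (\<forall>u\<in>kys h. ord u m)" using lt_props[OF TO hP h(2)] h(3) by simp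
  define c where "c = lkp f m / lkp h m"
  define f' where "f' = f - Poly_Mapping.single 0 c * h"
  have sI: "Poly_Mapping.single 0 c * h \<in> I" using I_scale[OF ideal h(1)] .
  have sP: "Poly_Mapping.single 0 c * h \<in> Pn n" using sI I_sub[OF ideal] by blast
  have f'P: "f' \<in> Pn n" unfolding f'_def using Pn_diff[OF f sP] .
  have dI: "f - f' \<in> I" unfolding f'_def using sI by simp
  have lk: "lkp f' u = lkp f u - c * lkp h u" for u
    unfolding f'_def by (simp add: lookup_minus scale_lookup)
  have hm: "lkp h m \<noteq> 0" using lp by (simp add: in_keys_iff)
  have "lkp f' m = 0" using lk[of m] hm unfolding c_def by simp
  hence mnot: "m \<notin> kys f'" by (simp add: in_keys_iff)
  have ks: "u \<in> kys f \<or> u \<in> kys h" if "u \<in> kys f'" for u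
  proof (rule ccontr)
    assume "\<not> (u \<in> kys f \<or> u \<in> kys h)"
    hence "lkp f u = 0" "lkp h u = 0" by (auto simp: in_keys_iff)
    hence "lkp f' u = 0" using lk by simp
    thus False using that by (simp add: in_keys_iff)
  qed
  have mT: "m \<in> terms_n n" using m Pn_keys[OF f] by blast
  have A: "\<forall>u\<in>NS f'. ord u m \<and> u \<noteq> m"
  proof
    fix u assume u: "u \<in> NS f'"
    have "u \<noteq> m" using u mnot by blast
    moreover have "ord u m"
    proof (cases "u \<in> kys f")
      case True thus ?thesis using u mx by blast
    next
      case False
      have "u \<in> kys f'" using u by simp
      hence "u \<in> kys h" using ks False by blast
      thus ?thesis using lp by simp
    qed
    ultimately show "ord u m \<and> u \<noteq> m" by simp
  qed
  have B: "\<forall>u\<in>kys f'. \<exists>v\<in>kys f. ord u v"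
  proof
    fix u assume u: "u \<in> kys f'"
    show "\<exists>v\<in>kys f. ord u v"
    proof (cases "u \<in> kys f")
      case True thus ?thesis using o_refl[OF TO] Pn_keys[OF f] by blast
    next
      case False
      hence "ord u m" using ks[OF u] lp by blast
      moreover have "m \<in> kys f" using m by blast
      ultimately show ?thesis by blast
    qed
  qed
  show ?thesis using f'P dI A B by blast
qed

lemma good_nf_self: "f \<in> Pn n \<Longrightarrow> NS f = {} \<Longrightarrow> good_nf n ord I f f"
proof -
  assume f: "f \<in> Pn n" and e: "NS f = {}"
  have "\<forall>u\<in>kys f. \<exists>v\<in>kys f. ord u v"
  proof
    fix u assume u: "u \<in> kys f"
    have "ord u u" using o_refl[OF TO Pn_keys[OF f u]] .
    thus "\<exists>v\<in>kys f. ord u v" using u by blast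
  qed
  thus ?thesis unfolding good_nf_def using f e I_zero[OF ideal] by simp
qed

lemma good_nf_comb:
  assumes f: "f \<in> Pn n" and f': "f' \<in> Pn n" and d: "f - f' \<in> I"
    and b: "\<forall>u\<in>kys f'. \<exists>v\<in>kys f. ord u v" and r: "good_nf n ord I f' r"
  shows "good_nf n ord I f r"
proof -
  have e: "f - r = (f - f') + (f' - r)" by simp
  have "f' - r \<in> I" using r unfolding good_nf_def by simp
  hence "(f - f') + (f' - r) \<in> I" by (rule I_add[OF ideal d])
  hence I1: "f - r \<in> I" by (subst e)
  have "\<forall>u\<in>kys r. \<exists>v\<in>kys f. ord u v"
  proof
    fix u assume u: "u \<in> kys r"
    obtain v where v: "v \<in> kys f'" "ord u v" using r u unfolding good_nf_def by blast
    obtain w where w: "w \<in> kys f" "ord v w" using b v(1) by blast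
    have "r \<in> Pn n" using r unfolding good_nf_def by simp
    hence "u \<in> terms_n n" using u by (rule Pn_keys)
    hence "ord u w" using o_trans[OF TO _ _ _ v(2) w(2)] Pn_keys[OF f' v(1)] Pn_keys[OF f w(1)] by blast
    thus "\<exists>v\<in>kys f. ord u v" using w(1) by blast
  qed
  moreover have "r \<in> Pn n" "kys r \<inter> LTI ord I = {}" using r unfolding good_nf_def by simp_all
  ultimately show ?thesis using I1 unfolding good_nf_def by simp
qed

lemma NS_fin: "finite (NS f)" by simp

lemma nf_aux:
  "m \<in> terms_n n \<Longrightarrow> \<forall>f\<in>Pn n. (\<forall>u\<in>NS f. ord u m \<and> u \<noteq> m) \<longrightarrow> (\<exists>r. good_nf n ord I f r)"
proof (induction m rule: wf_induct[OF WF])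
  case (1 m)
  show ?case
  proof (intro ballI impI)
    fix f assume f: "f \<in> Pn n" and below: "\<forall>u\<in>NS f. ord u m \<and> u \<noteq> m"
    show "\<exists>r. good_nf n ord I f r"
    proof (cases "NS f = {}")
      case True thus ?thesis using good_nf_self[OF f] by blast
    next
      case False
      have sub: "NS f \<subseteq> terms_n n" using Pn_keys[OF f] by blast
      obtain m' where m': "m' \<in> NS f" "\<forall>u\<in>NS f. ord u m'"
        using max_exists[OF TO NS_fin False sub] by blast
      obtain f' where f': "f' \<in> Pn n" "f - f' \<in> I" "\<forall>u\<in>NS f'. ord u m' \<and> u \<noteq> m'"
        "\<forall>u\<in>kys f'. \<exists>v\<in>kys f. ord u v"
        using reduce_step[OF f m'] by blast
      have m'T: "m' \<in> terms_n n" using m'(1) sub by blast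
      have "ord m' m \<and> m' \<noteq> m" using below m'(1) by simp
      hence "(m', m) \<in> {(u, s). u \<in> terms_n n \<and> s \<in> terms_n n \<and> ord u s \<and> u \<noteq> s}"
        using m'T 1(2) by simp
      hence "\<forall>f\<in>Pn n. (\<forall>u\<in>NS f. ord u m' \<and> u \<noteq> m') \<longrightarrow> (\<exists>r. good_nf n ord I f r)"
        using 1(1)[rule_format] m'T by blast
      hence "\<exists>r. good_nf n ord I f' r" using f'(1) f'(3) by simp
      then obtain r where "good_nf n ord I f' r" by blast
      thus ?thesis using good_nf_comb[OF f f'(1) f'(2) f'(4)] by blast
    qed
  qed
qed

lemma nf_exists: "f \<in> Pn n \<Longrightarrow> \<exists>r. good_nf n ord I f r"
proof -
  assume f: "f \<in> Pn n"
  show ?thesis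
  proof (cases "NS f = {}")
    case True thus ?thesis using good_nf_self[OF f] by blast
  next
    case False
    have sub: "NS f \<subseteq> terms_n n" using Pn_keys[OF f] by blast
    obtain m' where m': "m' \<in> NS f" "\<forall>u\<in>NS f. ord u m'"
      using max_exists[OF TO NS_fin False sub] by blast
    obtain f' where f': "f' \<in> Pn n" "f - f' \<in> I" "\<forall>u\<in>NS f'. ord u m' \<and> u \<noteq> m'"
      "\<forall>u\<in>kys f'. \<exists>v\<in>kys f. ord u v"
      using reduce_step[OF f m'] by blast
    have m'T: "m' \<in> terms_n n" using m'(1) sub by blast
    have "\<exists>r. good_nf n ord I f' r" using nf_aux[OF m'T] f'(1) f'(3) by blast
    then obtain r where "good_nf n ord I f' r" by blast
    thus ?thesis using good_nf_comb[OF f f'(1) f'(2) f'(4)] by blast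
  qed
qed

end


context
  fixes n :: nat and ord and I :: "'a::field mpoly set"
  assumes TO: "term_ordering n ord" and ideal: "is_ideal n I"
    and WF: "wf {(u, s). u \<in> terms_n n \<and> s \<in> terms_n n \<and> ord u s \<and> u \<noteq> s}"
begin

lemma GB_exists: "\<exists>G. reduced_GB n ord I G"
proof -
  have "\<forall>f\<in>Pn n. \<exists>r. good_nf n ord I f r" using nf_exists[OF TO ideal WF] by blast
  then obtain R where R: "\<forall>f\<in>Pn n. good_nf n ord I f (R f)" using bchoice by blast
  define g where "g m = Poly_Mapping.single m (1::'a) - R (Poly_Mapping.single m 1)" for m
  define G where "G = g ` Min_set ord I"
  have facts: "g m \<in> I \<and> lt ord (g m) = m \<and> g m \<noteq> 0 \<and> lc ord (g m) = 1
      \<and> (\<forall>t\<in>kys (g m). t \<noteq> m \<longrightarrow> t \<notin> LTI ord I)" if m: "m \<in> Min_set ord I" for m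
  proof -
    have mL: "m \<in> LTI ord I" using m unfolding Min_set_def by simp
    have mT: "m \<in> terms_n n" using LTI_T[OF TO ideal mL] .
    have sP: "Poly_Mapping.single m (1::'a) \<in> Pn n" using Pn_single[OF mT] .
    have gn: "good_nf n ord I (Poly_Mapping.single m 1) (R (Poly_Mapping.single m 1))" using R sP by blast
    let ?r = "R (Poly_Mapping.single m (1::'a))"
    have rP: "?r \<in> Pn n" and gI: "g m \<in> I" and rN: "kys ?r \<inter> LTI ord I = {}"
      and rb: "\<forall>u\<in>kys ?r. \<exists>v\<in>kys (Poly_Mapping.single m (1::'a)). ord u v"
      using gn unfolding good_nf_def g_def by simp_all
    have mr: "m \<notin> kys ?r" using rN mL by blast
    have gP: "g m \<in> Pn n" using gI I_sub[OF ideal] by blast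
    have lk: "lkp (g m) t = (if t = m then 1 else 0) - lkp ?r t" for t
      unfolding g_def by (simp add: lookup_minus lookup_single)
    have gm: "lkp (g m) m = 1" using lk[of m] mr by (simp add: in_keys_iff)
    hence mk: "m \<in> kys (g m)" by (simp add: in_keys_iff)
    have other: "t \<in> kys ?r" if "t \<in> kys (g m)" "t \<noteq> m" for t
      using that lk[of t] by (simp add: in_keys_iff)
    have below: "\<forall>t\<in>kys (g m). ord t m"
    proof
      fix t assume t: "t \<in> kys (g m)"
      show "ord t m"
      proof (cases "t = m")
        case True thus ?thesis using o_refl[OF TO mT] by simp
      next
        case False
        hence "t \<in> kys ?r" using other t by blast
        thus ?thesis using rb by simp
      qed
    qed
    have ltm: "lt ord (g m) = m" using lt_eq[OF TO gP mk below] .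
    have "g m \<noteq> 0" using mk by auto
    moreover have "lc ord (g m) = 1" unfolding lc_def using ltm gm by simp
    moreover have "\<forall>t\<in>kys (g m). t \<noteq> m \<longrightarrow> t \<notin> LTI ord I" using other rN by blast
    ultimately show ?thesis using gI ltm by simp
  qed
  have "reduced_GB n ord I G" unfolding reduced_GB_def
  proof (intro conjI)
    show "finite G" unfolding G_def using Min_finite[OF TO ideal] by simp
    show "G \<subseteq> I" unfolding G_def using facts by blast
    show "0 \<notin> G" unfolding G_def using facts by fastforce
    show "\<forall>f\<in>I. f \<noteq> 0 \<longrightarrow> (\<exists>g\<in>G. tdvd (lt ord g) (lt ord f))"
    proof (intro ballI impI)
      fix f assume "f \<in> I" "f \<noteq> 0"
      hence "lt ord f \<in> LTI ord I" by (rule LTI_I[OF TO ideal])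
      then obtain m where m: "m \<in> Min_set ord I" "tdvd m (lt ord f)" using min_exists[OF TO ideal] by blast
      have "g m \<in> G" unfolding G_def using m(1) by simp
      moreover have "lt ord (g m) = m" using facts[OF m(1)] by simp
      ultimately show "\<exists>g\<in>G. tdvd (lt ord g) (lt ord f)" using m(2) by metis
    qed
    show "\<forall>g\<in>G. lc ord g = 1" unfolding G_def using facts by simp
    show "\<forall>ga\<in>G. \<forall>h\<in>G. ga \<noteq> h \<longrightarrow> (\<forall>t\<in>kys ga. \<not> tdvd (lt ord h) t)"
    proof (intro ballI impI)
      fix ga h t assume ga: "ga \<in> G" and h: "h \<in> G" and ne: "ga \<noteq> h" and t: "t \<in> kys ga"
      obtain m where m: "m \<in> Min_set ord I" "ga = g m" using ga unfolding G_def by blast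
      obtain m' where m': "m' \<in> Min_set ord I" "h = g m'" using h unfolding G_def by blast
      have mm: "m \<noteq> m'" using ne m m' by blast
      have ltm': "lt ord h = m'" using facts[OF m'(1)] m'(2) by simp
      have m'L: "m' \<in> LTI ord I" using m'(1) unfolding Min_set_def by simp
      show "\<not> tdvd (lt ord h) t"
      proof
        assume d: "tdvd (lt ord h) t"
        show False
        proof (cases "t = m")
          case True
          hence "tdvd m' m" using d ltm' by simp
          hence "m' = m" using m(1) m'L unfolding Min_set_def by blast
          thus False using mm by simp
        next
          case False
          hence nl: "t \<notin> LTI ord I" using facts[OF m(1)] t m(2) by blast
          have gaP: "ga \<in> Pn n" using ga \<open>G \<subseteq> I\<close> I_sub[OF ideal] by blast
          have "t \<in> terms_n n" using Pn_keys[OF gaP t] .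
          hence "t \<in> LTI ord I" using LTI_up[OF TO ideal m'L] d ltm' by simp
          thus False using nl by simp
        qed
      qed
    qed
  qed
  thus ?thesis by blast
qed

end


definition dZ :: "nat set \<Rightarrow> (nat \<Rightarrow>\<^sub>0 nat) \<Rightarrow> nat" where
  "dZ Z t = (\<Sum>i\<in>Z. lkp t i)"

definition ordZ :: "nat \<Rightarrow> nat set \<Rightarrow> (nat \<Rightarrow>\<^sub>0 nat) \<Rightarrow> (nat \<Rightarrow>\<^sub>0 nat) \<Rightarrow> bool" where
  "ordZ n Z t u \<longleftrightarrow> dZ Z t < dZ Z u \<or> (dZ Z t = dZ Z u \<and> (deg n t < deg n u \<or> (deg n t = deg n u \<and> t \<le> u)))"

lemma dZ_add: "dZ Z (t + s) = dZ Z t + dZ Z s"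
  unfolding dZ_def by (simp add: lookup_add sum.distrib)

lemma deg_add: "deg n (t + s) = deg n t + deg n s"
  unfolding deg_def by (simp add: lookup_add sum.distrib)

lemma dZ_zero: "dZ Z 0 = 0" unfolding dZ_def by simp
lemma deg_zero: "deg n 0 = 0" unfolding deg_def by simp

lemma deg_zero_T: "t \<in> terms_n n \<Longrightarrow> deg n t = 0 \<Longrightarrow> t = 0"
proof (rule poly_mapping_eqI)
  fix i assume t: "t \<in> terms_n n" and d: "deg n t = 0"
  show "lkp t i = lkp 0 i"
  proof (cases "i < n")
    case True
    hence "lkp t i \<le> deg n t" unfolding deg_def by (intro member_le_sum) auto
    thus ?thesis using d by simp
  next
    case False thus ?thesis using T_outside[OF t] by simp
  qed
qed

lemma ordZ_TO: "term_ordering n (ordZ n Z)"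
  unfolding term_ordering_def
proof (intro conjI ballI impI)
  fix t assume "t \<in> terms_n n" thus "ordZ n Z t t" unfolding ordZ_def by simp
next
  fix t u assume "ordZ n Z t u \<and> ordZ n Z u t" thus "t = u" unfolding ordZ_def by auto
next
  fix t u v assume "ordZ n Z t u \<and> ordZ n Z u v" thus "ordZ n Z t v"
    unfolding ordZ_def by (auto elim: order_trans)
next
  fix t u show "ordZ n Z t u \<or> ordZ n Z u t" unfolding ordZ_def by auto
next
  fix t u s assume "ordZ n Z t u" thus "ordZ n Z (t + s) (u + s)"
    unfolding ordZ_def dZ_add deg_add by (auto intro: add_right_mono)
next
  fix t assume t: "t \<in> terms_n n" show "ordZ n Z 0 t"
  proof (cases "deg n t = 0")
    case True thus ?thesis using deg_zero_T[OF t] unfolding ordZ_def by simp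
  next
    case False thus ?thesis unfolding ordZ_def dZ_zero deg_zero by auto
  qed
qed

lemma finite_deg_le: "finite {t \<in> terms_n n. deg n t \<le> b}"
proof (rule inj_on_finite[where f = "\<lambda>t. restrict (lkp t) {..<n}" and B = "PiE {..<n} (\<lambda>_. {..b})"])
  show "inj_on (\<lambda>t. restrict (lkp t) {..<n}) {t \<in> terms_n n. deg n t \<le> b}"
  proof (rule inj_onI)
    fix t u assume t: "t \<in> {t \<in> terms_n n. deg n t \<le> b}" and u: "u \<in> {t \<in> terms_n n. deg n t \<le> b}"
      and e: "restrict (lkp t) {..<n} = restrict (lkp u) {..<n}"
    show "t = u"
    proof (rule poly_mapping_eqI)
      fix i show "lkp t i = lkp u i"
      proof (cases "i < n")
        case True
        have "restrict (lkp t) {..<n} i = restrict (lkp u) {..<n} i" using e by simp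
        thus ?thesis using True by simp
      next
        case False
        have "lkp t i = 0" using T_outside[of t n i] t False by simp
        moreover have "lkp u i = 0" using T_outside[of u n i] u False by simp
        ultimately show ?thesis by simp
      qed
    qed
  qed
  show "(\<lambda>t. restrict (lkp t) {..<n}) ` {t \<in> terms_n n. deg n t \<le> b} \<subseteq> PiE {..<n} (\<lambda>_. {..b})"
  proof
    fix x assume "x \<in> (\<lambda>t. restrict (lkp t) {..<n}) ` {t \<in> terms_n n. deg n t \<le> b}"
    then obtain t where t: "t \<in> terms_n n" "deg n t \<le> b" "x = restrict (lkp t) {..<n}" by blast
    have "\<forall>i\<in>{..<n}. lkp t i \<le> b"
    proof
      fix i assume "i \<in> {..<n}"
      hence "lkp t i \<le> deg n t" unfolding deg_def by (intro member_le_sum) auto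
      thus "lkp t i \<le> b" using t(2) by simp
    qed
    thus "x \<in> PiE {..<n} (\<lambda>_. {..b})" using t(3) by auto
  qed
  show "finite (PiE {..<n} (\<lambda>_. {..b}))" by (rule finite_PiE) auto
qed

lemma ordZ_wf: "wf {(u, s). u \<in> terms_n n \<and> s \<in> terms_n n \<and> ordZ n Z u s \<and> u \<noteq> s}"
proof (rule wfI_min)
  fix x :: "nat \<Rightarrow>\<^sub>0 nat" and Q assume x: "x \<in> Q"
  show "\<exists>z\<in>Q. \<forall>y. (y, z) \<in> {(u, s). u \<in> terms_n n \<and> s \<in> terms_n n \<and> ordZ n Z u s \<and> u \<noteq> s} \<longrightarrow> y \<notin> Q"
  proof (cases "Q \<inter> terms_n n = {}")
    case True thus ?thesis using x by blast
  next
    case False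
    then obtain x0 where x0: "x0 \<in> Q \<inter> terms_n n" by blast
    obtain z1 where z1: "z1 \<in> Q \<inter> terms_n n" "\<forall>y. y \<in> Q \<inter> terms_n n \<longrightarrow> dZ Z z1 \<le> dZ Z y"
      using ex_has_least_nat[of "\<lambda>y. y \<in> Q \<inter> terms_n n" x0 "dZ Z"] x0 by blast
    define Q1 where "Q1 = {t \<in> Q \<inter> terms_n n. dZ Z t = dZ Z z1}"
    obtain z2 where z2: "z2 \<in> Q1" "\<forall>y. y \<in> Q1 \<longrightarrow> deg n z2 \<le> deg n y"
      using ex_has_least_nat[of "\<lambda>y. y \<in> Q1" z1 "deg n"] z1 unfolding Q1_def by blast
    define Q2 where "Q2 = {t \<in> Q1. deg n t = deg n z2}"
    have fin: "finite Q2"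
      by (rule finite_subset[OF _ finite_deg_le[of n "deg n z2"]]) (auto simp: Q2_def Q1_def)
    have ne: "Q2 \<noteq> {}" using z2 unfolding Q2_def by blast
    define z where "z = Min Q2"
    have zQ2: "z \<in> Q2" unfolding z_def using Min_in[OF fin ne] .
    have zmin: "\<forall>y\<in>Q2. z \<le> y" unfolding z_def using Min_le[OF fin] by blast
    have "\<forall>y. (y, z) \<in> {(u, s). u \<in> terms_n n \<and> s \<in> terms_n n \<and> ordZ n Z u s \<and> u \<noteq> s} \<longrightarrow> y \<notin> Q"
    proof (intro allI impI notI)
      fix y assume r: "(y, z) \<in> {(u, s). u \<in> terms_n n \<and> s \<in> terms_n n \<and> ordZ n Z u s \<and> u \<noteq> s}" and yQ: "y \<in> Q"
      have yT: "y \<in> terms_n n" and o: "ordZ n Z y z" and nz: "y \<noteq> z" using r by auto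
      have zz: "dZ Z z = dZ Z z1" "deg n z = deg n z2" "z \<in> Q1" using zQ2 unfolding Q2_def Q1_def by auto
      have "dZ Z z1 \<le> dZ Z y" using z1(2) yQ yT by blast
      hence dy: "dZ Z y = dZ Z z1" using o zz unfolding ordZ_def by auto
      hence "y \<in> Q1" unfolding Q1_def using yQ yT by blast
      hence "deg n z2 \<le> deg n y" using z2(2) by blast
      hence "deg n y = deg n z2" using o zz dy unfolding ordZ_def by auto
      hence "y \<in> Q2" using \<open>y \<in> Q1\<close> unfolding Q2_def by blast
      hence "z \<le> y" using zmin by blast
      moreover have "y \<le> z" using o zz dy \<open>deg n y = deg n z2\<close> unfolding ordZ_def by auto
      ultimately show False using nz by simp
    qed
    moreover have "z \<in> Q" using zQ2 unfolding Q2_def Q1_def by blast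
    ultimately show ?thesis by blast
  qed
qed


lemma tdvd_single: "z \<in> kys t \<Longrightarrow> tdvd (Poly_Mapping.single z 1) t"
  unfolding tdvd_def by (auto simp: lookup_single when_def in_keys_iff)

lemma tdvd_single_cases: "tdvd s (Poly_Mapping.single z 1) \<Longrightarrow> s \<noteq> 0 \<Longrightarrow> s = Poly_Mapping.single z 1"
proof -
  assume d: "tdvd s (Poly_Mapping.single z 1)" and ne: "s \<noteq> 0"
  have le: "lkp s i \<le> (if i = z then 1 else 0)" for i
    using d unfolding tdvd_def by (auto simp: lookup_single when_def split: if_splits)
  have "lkp s z \<noteq> 0"
  proof
    assume "lkp s z = 0"
    hence "lkp s i = 0" for i using le[of i] by (cases "i = z") auto
    hence "s = 0" by (intro poly_mapping_eqI) simp
    thus False using ne by simp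
  qed
  hence "lkp s z = 1" using le[of z] by simp
  show ?thesis
  proof (rule poly_mapping_eqI)
    fix i show "lkp s i = lkp (Poly_Mapping.single z 1) i"
    proof (cases "i = z")
      case True thus ?thesis using \<open>lkp s z = 1\<close> by simp
    next
      case False thus ?thesis using le[of i] by (simp add: lookup_single when_def)
    qed
  qed
qed

lemma lookup_tail: "lkp (tail z f) u = (if u = Poly_Mapping.single z 1 then 1 else 0) - lkp f u / lin_coeff f z"
  unfolding tail_def var_def by (simp add: lookup_minus lookup_map0 lookup_single when_def)

lemma indetsI: "u \<in> kys f \<Longrightarrow> i \<in> kys u \<Longrightarrow> i \<in> indets f"
  unfolding indets_def by blast

lemma maxideal_lt_nonzero:
  assumes "f \<in> maxideal n" "u \<in> kys f" shows "u \<noteq> 0"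
  using assms unfolding maxideal_def by (auto simp: in_keys_iff)

context
  fixes n :: nat and I :: "'a::field mpoly set"
  assumes ideal: "is_ideal n I" and IM: "I \<subseteq> maxideal n"
begin

lemma gb_elem:
  assumes TO: "term_ordering n ord" and G: "reduced_GB n ord I G" and g: "g \<in> G"
    and lt: "lt ord g = Poly_Mapping.single z 1"
  shows "g \<in> I \<and> g \<noteq> 0 \<and> z < n \<and> lin_coeff g z = 1
    \<and> (\<forall>u\<in>kys g. u \<noteq> Poly_Mapping.single z 1 \<longrightarrow> z \<notin> kys u)"
proof -
  have gI: "g \<in> I" and g0: "g \<noteq> 0" and lc: "lc ord g = 1" using G g unfolding reduced_GB_def by auto
  have gP: "g \<in> Pn n" using gI I_sub[OF ideal] by blast
  have lp: "Poly_Mapping.single z 1 \<in> kys g \<and> (\<forall>u\<in>kys g. ord u (Poly_Mapping.single z 1))"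
    using lt_props[OF TO gP g0] lt by simp
  have sT: "Poly_Mapping.single z 1 \<in> terms_n n" using Pn_keys[OF gP] lp by blast
  hence zn: "z < n" unfolding terms_n_def by simp
  have lcz: "lin_coeff g z = 1" using lc lt unfolding lc_def lin_coeff_def by simp
  have "\<forall>u\<in>kys g. u \<noteq> Poly_Mapping.single z 1 \<longrightarrow> z \<notin> kys u"
  proof (intro ballI impI notI)
    fix u assume u: "u \<in> kys g" "u \<noteq> Poly_Mapping.single z 1" "z \<in> kys u"
    have uT: "u \<in> terms_n n" using Pn_keys[OF gP u(1)] .
    have "ord (Poly_Mapping.single z 1) u" using tdvd_ord[OF TO sT uT tdvd_single[OF u(3)]] .
    moreover have "ord u (Poly_Mapping.single z 1)" using lp u(1) by blast
    ultimately have "u = Poly_Mapping.single z 1" using o_antisym[OF TO uT sT] by simp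
    thus False using u(2) by simp
  qed
  thus ?thesis using gI g0 zn lcz by simp
qed

lemma easy:
  assumes Gb: "Gb \<in> GFan n I"
  shows "has_sep_tuple n I (LI Gb) \<and> LI Gb \<subseteq> {..<n}"
proof -
  obtain ord G where o: "term_ordering n ord" "reduced_GB n ord I G" "Gb = (\<lambda>g. (lt ord g, g)) ` G"
    using Gb unfolding GFan_def by blast
  have LIeq: "z \<in> LI Gb \<longleftrightarrow> (\<exists>g\<in>G. lt ord g = Poly_Mapping.single z 1)" for z
  proof
    assume "z \<in> LI Gb"
    then obtain g where "(Poly_Mapping.single z 1, g) \<in> (\<lambda>g. (lt ord g, g)) ` G" unfolding LI_def o(3) by blast
    thus "\<exists>g\<in>G. lt ord g = Poly_Mapping.single z 1" by auto
  next
    assume "\<exists>g\<in>G. lt ord g = Poly_Mapping.single z 1"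
    then obtain g where g: "g \<in> G" "lt ord g = Poly_Mapping.single z 1" by blast
    hence "(Poly_Mapping.single z 1, g) \<in> (\<lambda>g. (lt ord g, g)) ` G" by force
    thus "z \<in> LI Gb" unfolding LI_def o(3) by blast
  qed
  define F where "F z = (SOME g. g \<in> G \<and> lt ord g = Poly_Mapping.single z 1)" for z
  have F: "F z \<in> G \<and> lt ord (F z) = Poly_Mapping.single z 1" if "z \<in> LI Gb" for z
    using LIeq[of z] that someI_ex unfolding F_def by (metis (mono_tags, lifting))
  have Fe: "F z \<in> I \<and> F z \<noteq> 0 \<and> z < n \<and> lin_coeff (F z) z = 1
      \<and> (\<forall>u\<in>kys (F z). u \<noteq> Poly_Mapping.single z 1 \<longrightarrow> z \<notin> kys u)" if "z \<in> LI Gb" for z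
    using gb_elem[OF o(1) o(2)] F[OF that] by blast
  have sub: "LI Gb \<subseteq> {..<n}" using Fe by auto
  have sep: "z_separating n (F z) z" if z: "z \<in> LI Gb" for z
  proof -
    have e: "F z \<in> I" "F z \<noteq> 0" "z < n" "lin_coeff (F z) z = 1"
      "\<forall>u\<in>kys (F z). u \<noteq> Poly_Mapping.single z 1 \<longrightarrow> z \<notin> kys u" using Fe[OF z] by auto
    have "z \<notin> indets (tail z (F z))"
    proof
      assume "z \<in> indets (tail z (F z))"
      then obtain u where u: "u \<in> kys (tail z (F z))" "z \<in> kys u" unfolding indets_def by blast
      have lu: "lkp (tail z (F z)) u \<noteq> 0" using u(1) by (simp add: in_keys_iff)
      show False
      proof (cases "u = Poly_Mapping.single z 1")
        case True
        thus False using lu e(4) unfolding lin_coeff_def by (simp add: lookup_tail lin_coeff_def)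
      next
        case False
        hence "lkp (F z) u \<noteq> 0" using lu e(4) by (simp add: lookup_tail)
        hence "u \<in> kys (F z)" by (simp add: in_keys_iff)
        thus False using e(5) False u(2) by blast
      qed
    qed
    thus ?thesis unfolding z_separating_def using e IM by auto
  qed
  have coh: "z \<notin> indets (F z')" if z: "z \<in> LI Gb" and z': "z' \<in> LI Gb" and ne: "z \<noteq> z'" for z z'
  proof
    assume "z \<in> indets (F z')"
    then obtain u where u: "u \<in> kys (F z')" "z \<in> kys u" unfolding indets_def by blast
    have "F z \<noteq> F z'" using F[OF z] F[OF z'] ne by (metis lookup_single_eq lookup_single_not_eq zero_neq_one)
    hence ne': "F z' \<noteq> F z" by simp
    have red: "\<forall>g\<in>G. \<forall>h\<in>G. g \<noteq> h \<longrightarrow> (\<forall>t\<in>kys g. \<not> tdvd (lt ord h) t)"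
      using o(2) unfolding reduced_GB_def by simp
    have "F z' \<in> G" "F z \<in> G" using F[OF z] F[OF z'] by simp_all
    hence "\<not> tdvd (lt ord (F z)) u" using red ne' u(1) by blast
    thus False using F[OF z] tdvd_single[OF u(2)] by simp
  qed
  have "coherently_separating n (LI Gb) F"
    unfolding coherently_separating_def using sub sep coh Fe IM by blast
  moreover have "\<forall>z\<in>LI Gb. F z \<in> I" using Fe by blast
  ultimately show ?thesis unfolding has_sep_tuple_def using sub by blast
qed

end


context
  fixes n :: nat and I :: "'a::field mpoly set"
  assumes ideal: "is_ideal n I" and IM: "I \<subseteq> maxideal n"
begin

lemma sep_lt:
  assumes Zn: "Z \<subseteq> {..<n}" and coh: "coherently_separating n Z F" and z: "z \<in> Z"
  shows "lt (ordZ n Z) (F z) = Poly_Mapping.single z 1"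
proof -
  let ?f = "F z" and ?s = "Poly_Mapping.single z (1::nat)"
  have fM: "?f \<in> maxideal n" and sep: "z_separating n ?f z"
    and other: "\<forall>z'\<in>Z. z' \<noteq> z \<longrightarrow> z' \<notin> indets ?f"
    using coh z unfolding coherently_separating_def by auto
  have fP: "?f \<in> Pn n" using fM unfolding maxideal_def by simp
  have c: "lin_coeff ?f z \<noteq> 0" and zt: "z \<notin> indets (tail z ?f)" using sep unfolding z_separating_def by auto
  have sk: "?s \<in> kys ?f" using c unfolding lin_coeff_def by (simp add: in_keys_iff)
  have finZ: "finite Z" using Zn finite_subset by blast
  have ds: "dZ Z ?s = 1" unfolding dZ_def using finZ z by (simp add: lookup_single when_def)
  have "\<forall>u\<in>kys ?f. ordZ n Z u ?s"
  proof
    fix u assume u: "u \<in> kys ?f"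
    show "ordZ n Z u ?s"
    proof (cases "u = ?s")
      case True thus ?thesis using o_refl[OF ordZ_TO] Pn_keys[OF fP u] by simp
    next
      case False
      have "lkp (tail z ?f) u \<noteq> 0" using False c u by (simp add: lookup_tail in_keys_iff)
      hence ut: "u \<in> kys (tail z ?f)" by (simp add: in_keys_iff)
      have "lkp u i = 0" if i: "i \<in> Z" for i
      proof (cases "i = z")
        case True
        have "z \<notin> kys u" using zt ut indetsI by metis
        thus ?thesis using True by (simp add: in_keys_iff)
      next
        case False
        have "i \<notin> indets ?f" using other i False by blast
        hence "i \<notin> kys u" using u indetsI by metis
        thus ?thesis by (simp add: in_keys_iff)
      qed
      hence "dZ Z u = 0" unfolding dZ_def by simp
      thus ?thesis using ds unfolding ordZ_def by simp
    qed
  qed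
  thus ?thesis using lt_eq[OF ordZ_TO fP sk] by simp
qed

lemma hard:
  assumes Zn: "Z \<subseteq> {..<n}" and hs: "has_sep_tuple n I Z"
  shows "\<exists>Gb\<in>GFan n I. Z \<subseteq> LI Gb"
proof -
  obtain F where coh: "coherently_separating n Z F" and FI: "\<forall>z\<in>Z. F z \<in> I"
    using hs unfolding has_sep_tuple_def by blast
  obtain G where G: "reduced_GB n (ordZ n Z) I G"
    using GB_exists[OF ordZ_TO ideal ordZ_wf] by blast
  define Gb where "Gb = (\<lambda>g. (lt (ordZ n Z) g, g)) ` G"
  have "Gb \<in> GFan n I" unfolding GFan_def Gb_def using ordZ_TO G by blast
  moreover have "Z \<subseteq> LI Gb"
  proof
    fix z assume z: "z \<in> Z"
    have F0: "F z \<noteq> 0" using coh z unfolding coherently_separating_def by auto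
    have "\<forall>f\<in>I. f \<noteq> 0 \<longrightarrow> (\<exists>g\<in>G. tdvd (lt (ordZ n Z) g) (lt (ordZ n Z) f))"
      using G unfolding reduced_GB_def by simp
    then obtain g where g: "g \<in> G" "tdvd (lt (ordZ n Z) g) (lt (ordZ n Z) (F z))"
      using FI z F0 by blast
    have d: "tdvd (lt (ordZ n Z) g) (Poly_Mapping.single z 1)" using g(2) sep_lt[OF Zn coh z] by simp
    have gI: "g \<in> I" and g0: "g \<noteq> 0" using G g(1) unfolding reduced_GB_def by auto
    have gP: "g \<in> Pn n" using gI I_sub[OF ideal] by blast
    have "lt (ordZ n Z) g \<in> kys g" using lt_props[OF ordZ_TO gP g0] by simp
    hence "lt (ordZ n Z) g \<noteq> 0" using maxideal_lt_nonzero[of g n] gI IM by blast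
    hence "lt (ordZ n Z) g = Poly_Mapping.single z 1" using tdvd_single_cases[OF d] by simp
    hence "(Poly_Mapping.single z 1, g) \<in> Gb" unfolding Gb_def using g(1) by force
    thus "z \<in> LI Gb" unfolding LI_def by blast
  qed
  ultimately show ?thesis by blast
qed

end

theorem proposition3p6:
  fixes n :: nat and I :: "('a::field) mpoly set"
  assumes "is_ideal n I" and "I \<subseteq> maxideal n"
  shows "(\<forall>Gb\<in>GFan n I. sepdim n I \<le> n - card (LI Gb))
    \<and> (\<forall>Gb\<in>GFan n I. sepdim n I = n - card (LI Gb)
          \<longleftrightarrow> card (LI Gb) = Max ((\<lambda>G. card (LI G)) ` GFan n I))
    \<and> (\<forall>Gb\<in>GFan n I. card (LI Gb) = Max ((\<lambda>G. card (LI G)) ` GFan n I)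
          \<longrightarrow> optimal_sep_reembedding n I (LI Gb))"
proof -
  note ideal = assms(1) and IM = assms(2)
  define S where "S = {card Z | Z. Z \<subseteq> {..<n} \<and> has_sep_tuple n I Z}"
  have Sfin: "finite S"
  proof (rule finite_subset[of _ "{..n}"])
    show "S \<subseteq> {..n}"
    proof
      fix k assume "k \<in> S"
      then obtain Z where "k = card Z" "Z \<subseteq> {..<n}" unfolding S_def by blast
      thus "k \<in> {..n}" using card_mono[of "{..<n}" Z] by simp
    qed
  qed simp
  have "has_sep_tuple n I {}" unfolding has_sep_tuple_def coherently_separating_def by simp
  hence Sne: "S \<noteq> {}" unfolding S_def by blast
  define M where "M = Max S"
  have sd: "sepdim n I = n - M" unfolding sepdim_def M_def S_def by simp
  have MS: "M \<in> S" unfolding M_def using Max_in[OF Sfin Sne] .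
  have leM: "k \<in> S \<Longrightarrow> k \<le> M" for k unfolding M_def using Max_ge[OF Sfin] by blast
  have Mn: "M \<le> n"
  proof -
    obtain Z where "M = card Z" "Z \<subseteq> {..<n}" using MS unfolding S_def by blast
    thus ?thesis using card_mono[of "{..<n}" Z] by simp
  qed
  have c1: "card (LI Gb) \<le> M" if "Gb \<in> GFan n I" for Gb
    using easy[OF ideal IM that] leM unfolding S_def by blast
  obtain Gb0 where Gb0: "Gb0 \<in> GFan n I" "M \<le> card (LI Gb0)"
  proof -
    obtain Z where Z: "M = card Z" "Z \<subseteq> {..<n}" "has_sep_tuple n I Z" using MS unfolding S_def by blast
    obtain Gb where Gb: "Gb \<in> GFan n I" "Z \<subseteq> LI Gb" using hard[OF ideal IM Z(2) Z(3)] by blast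
    have "finite (LI Gb)" using easy[OF ideal IM Gb(1)] finite_subset by blast
    hence "card Z \<le> card (LI Gb)" using card_mono Gb(2) by blast
    thus ?thesis using that Gb(1) Z(1) by simp
  qed
  have imfin: "finite ((\<lambda>G. card (LI G)) ` GFan n I)"
  proof (rule finite_subset[of _ "{..M}"])
    show "(\<lambda>G. card (LI G)) ` GFan n I \<subseteq> {..M}" using c1 by auto
  qed simp
  have Mx: "Max ((\<lambda>G. card (LI G)) ` GFan n I) = M"
  proof (rule antisym)
    show "Max ((\<lambda>G. card (LI G)) ` GFan n I) \<le> M"
      using c1 Gb0(1) imfin by (subst Max_le_iff) auto
    show "M \<le> Max ((\<lambda>G. card (LI G)) ` GFan n I)"
    proof -
      have "card (LI Gb0) \<in> (\<lambda>G. card (LI G)) ` GFan n I" using Gb0(1) by (rule imageI)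
      hence "card (LI Gb0) \<le> Max ((\<lambda>G. card (LI G)) ` GFan n I)" by (rule Max_ge[OF imfin])
      thus ?thesis using Gb0(2) by simp
    qed
  qed
  show ?thesis
  proof (intro conjI ballI)
    fix Gb assume "Gb \<in> GFan n I"
    hence "card (LI Gb) \<le> M" by (rule c1)
    thus "sepdim n I \<le> n - card (LI Gb)" using sd by simp
  next
    fix Gb assume Gb: "Gb \<in> GFan n I"
    have "card (LI Gb) \<le> M" using c1[OF Gb] .
    thus "sepdim n I = n - card (LI Gb) \<longleftrightarrow> card (LI Gb) = Max ((\<lambda>G. card (LI G)) ` GFan n I)"
      using sd Mx Mn by auto
  next
    fix Gb assume Gb: "Gb \<in> GFan n I"
    show "card (LI Gb) = Max ((\<lambda>G. card (LI G)) ` GFan n I) \<longrightarrow> optimal_sep_reembedding n I (LI Gb)"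
    proof
      assume "card (LI Gb) = Max ((\<lambda>G. card (LI G)) ` GFan n I)"
      hence cM: "card (LI Gb) = M" using Mx by simp
      have "has_sep_tuple n I (LI Gb)" using easy[OF ideal IM Gb] by simp
      moreover have "\<forall>Z'. Z' \<subseteq> {..<n} \<and> has_sep_tuple n I Z' \<longrightarrow> card Z' \<le> card (LI Gb)"
        using leM cM unfolding S_def by blast
      ultimately show "optimal_sep_reembedding n I (LI Gb)" unfolding optimal_sep_reembedding_def by simp
    qed
  qed
qed


end
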